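(* Let $m,a,b,n$ be positive integers with $n\ge 3$ and $(3m+1)/2\le a<b\le (5m-1)/3$. Let $A\subset\mathbb N_+$ with $|A|=n-1$, $\min A=a$, $\max A=b$, such that the sums $x_1+\dots+x_h$, over all $h\in\{1,2,3\}$ and all multisets $\{x_1,\dots,x_h\}$ of elements of $A$, are pairwise distinct modulo $m$. Let $S=\langle\{m\}\cup A\rangle_{4m}$ and $P_4=P\cap[4m,5m-1]$. Then the integer interval $4m+\big[\lfloor (m+1)/3\rfloor,\ \lceil (m-1)/2\rceil\big]$ is contained in $P_4$, and $|P_4|\ge m/6$.
   Context: $\mathbb N=\{0,1,2,\dots\}$, $\mathbb N_+=\mathbb N\setminus\{0\}$; $[x,y]=\{z\in\mathbb Z: x\le z\le y\}$, and $t+[x,y]=\{t+z: z\in[x,y]\}$. For a finite set $B$ of positive integers and a positive integer $t$, $\langle B\rangle_t=\big(\sum_{x\in B}\mathbb N x\big)\cup\{z\in\mathbb Z: z\ge t\}$; this is a numerical semigroup. For a numerical semigroup $S$, let $S^*=S\setminus\{0\}$, $D=S^*+S^*$ and $P=S^*\setminus D$ (the primitive elements). *)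

theory Defs
  imports Complex_Main "HOL-Library.Multiset"
begin

definition gen_sg :: "nat set \<Rightarrow> nat \<Rightarrow> nat set" where
  "gen_sg B t = {x. \<exists>f. x = (\<Sum>y\<in>B. f y * y)} \<union> {z. t \<le> z}"

definition nonzero :: "nat set \<Rightarrow> nat set" where
  "nonzero S = S - {0}"

definition decomposables :: "nat set \<Rightarrow> nat set" where
  "decomposables S = {x + y | x y. x \<in> nonzero S \<and> y \<in> nonzero S}"

definition primitives :: "nat set \<Rightarrow> nat set" where
  "primitives S = nonzero S - decomposables S"

end

theory Submission
  imports Defs
begin

lemma core:
  fixes m a b k c T L U :: nat
  assumes h1: "3*m+1 \<le> 2*a" and h2: "3*b+1 \<le> 5*m" and h3: "a*c \<le> T" and h4: "T \<le> b*c"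
    and h5: "m \<ge> 6" and h6: "m \<le> 3*L+1" and h7: "2*U \<le> m"
  shows "\<not> (4*m+L \<le> k*m+T \<and> k*m+T \<le> 4*m+U)"
proof
  assume H: "4*m+L \<le> k*m+T \<and> k*m+T \<le> 4*m+U"
  consider "c = 0" | "c = 1" | "c = 2" | "c = 3" | "c \<ge> 4" by linarith
  then show False
  proof cases
    case 1
    then have T: "T = 0" using h4 by simp
    show False
    proof (cases "k \<le> 4")
      case True
      then have "k*m \<le> 4*m" by simp
      then show ?thesis using H T h5 h6 by linarith
    next
      case False
      then have "5*m \<le> k*m" by simp
      then show ?thesis using H T h7 h5 by linarith
    qed
  next
    case 2
    then have T: "a \<le> T" "T \<le> b" using h3 h4 by simp_all
    show False
    proof (cases "k \<le> 2")
      case True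
      then have "k*m \<le> 2*m" by simp
      then show ?thesis using H T h2 by linarith
    next
      case False
      then have "3*m \<le> k*m" by simp
      then show ?thesis using H T h7 h1 by linarith
    qed
  next
    case 3
    then have T: "2*a \<le> T" "T \<le> 2*b" using h3 h4 by simp_all
    show False
    proof (cases "k = 0")
      case True
      then show ?thesis using H T h2 by simp
    next
      case k: False
      show ?thesis
      proof (cases "k = 1")
        case True
        then show ?thesis using H T h2 h6 by simp
      next
        case False
        with k have "2*m \<le> k*m" by simp
        then show ?thesis using H T h7 h1 by linarith
      qed
    qed
  next
    case 4
    then have T: "3*a \<le> T" using h3 by simp
    show False using H T h7 h1 by linarith
  next
    case 5
    then have "a*4 \<le> a*c" by (rule mult_le_mono2)
    then have T: "4*a \<le> T" using h3 by linarith
    show False using H T h7 h1 by linarith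
  qed
qed

lemma nz_ge:
  fixes B :: "nat set" and f :: "nat \<Rightarrow> nat"
  assumes fin: "finite B" and ge: "\<forall>y\<in>B. y \<ge> m" and s: "s = (\<Sum>y\<in>B. f y * y)" and nz: "s \<noteq> 0"
  shows "s \<ge> m"
proof -
  have "\<exists>y\<in>B. f y * y \<noteq> 0"
  proof (rule ccontr)
    assume "\<not> (\<exists>y\<in>B. f y * y \<noteq> 0)"
    then have "(\<Sum>y\<in>B. f y * y) = 0" by (intro sum.neutral) blast
    with nz s show False by simp
  qed
  then obtain y where y: "y \<in> B" "f y * y \<noteq> 0" by blast
  have "f y * y \<le> s" unfolding s by (rule member_le_sum[of y B "\<lambda>y. f y * y", OF y(1) _ fin]) auto
  moreover have "y \<le> f y * y" using y(2) by simp
  moreover have "m \<le> y" using ge y(1) by blast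
  ultimately show ?thesis by linarith
qed

lemma S_ge:
  assumes fin: "finite B" and ge: "\<forall>y\<in>B. y \<ge> m" and m4: "m \<le> t"
    and s: "s \<in> nonzero (gen_sg B t)"
  shows "s \<ge> m"
proof -
  have s0: "s \<noteq> 0" "s \<in> gen_sg B t" using s unfolding nonzero_def by auto
  show ?thesis
  proof (cases "t \<le> s")
    case True then show ?thesis using m4 by simp
  next
    case False
    then obtain f where "s = (\<Sum>y\<in>B. f y * y)" using s0(2) unfolding gen_sg_def by auto
    then show ?thesis using nz_ge[OF fin ge _ s0(1)] by blast
  qed
qed

theorem mainTheorem8:
  fixes m a b n :: nat and A :: "nat set"
  assumes "m > 0" "a > 0" "b > 0" "n \<ge> 3"
    and "(3 * real m + 1) / 2 \<le> real a" "a < b" "real b \<le> (5 * real m - 1) / 3"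
    and "A \<subseteq> {x. x > 0}" "card A = n - 1" "Min A = a" "Max A = b"
    and "\<forall>M1 M2. set_mset M1 \<subseteq> A \<and> size M1 \<in> {1,2,3}
               \<and> set_mset M2 \<subseteq> A \<and> size M2 \<in> {1,2,3} \<and> M1 \<noteq> M2
               \<longrightarrow> sum_mset M1 mod m \<noteq> sum_mset M2 mod m"
  shows "{4 * m + nat \<lfloor>(real m + 1) / 3\<rfloor> .. 4 * m + nat \<lceil>(real m - 1) / 2\<rceil>}
           \<subseteq> primitives (gen_sg (insert m A) (4 * m)) \<inter> {4 * m .. 5 * m - 1}
         \<and> real (card (primitives (gen_sg (insert m A) (4 * m)) \<inter> {4 * m .. 5 * m - 1}))
             \<ge> real m / 6"
proof -
  define L where "L = nat \<lfloor>(real m + 1) / 3\<rfloor>"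
  define U where "U = nat \<lceil>(real m - 1) / 2\<rceil>"
  define S where "S = gen_sg (insert m A) (4 * m)"
  have h1: "3*m+1 \<le> 2*a" by (subst of_nat_le_iff[where 'a=real, symmetric]) (use assms(5) in \<open>simp add: field_simps\<close>)
  have h2: "3*b+1 \<le> 5*m" by (subst of_nat_le_iff[where 'a=real, symmetric]) (use assms(7) assms(1) in \<open>simp add: field_simps\<close>)
  have h5: "m \<ge> 6" using h1 h2 assms(6) by linarith
  have fl0: "0 \<le> \<lfloor>(real m + 1) / 3\<rfloor>" by simp
  have Leq: "real L = real_of_int \<lfloor>(real m + 1) / 3\<rfloor>" unfolding L_def using fl0 by simp
  have Lr: "real L \<le> (real m + 1) / 3" "(real m + 1) / 3 < real L + 1"
    using floor_correct[of "(real m + 1) / 3"] unfolding Leq by auto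
  have cl0: "0 \<le> \<lceil>(real m - 1) / 2\<rceil>" using h5 by simp
  have Ueq: "real U = real_of_int \<lceil>(real m - 1) / 2\<rceil>" unfolding U_def using cl0 by simp
  have Ur: "(real m - 1) / 2 \<le> real U" "real U < (real m - 1) / 2 + 1"
    using conjunct1[OF ceiling_correct[of "(real m - 1) / 2"]] conjunct2[OF ceiling_correct[of "(real m - 1) / 2"]]
    unfolding Ueq by linarith+
  have h6s: "m < 3*L+2" by (subst of_nat_less_iff[where 'a=real, symmetric]) (use Lr in \<open>simp add: field_simps\<close>)
  have h6: "m \<le> 3*L+1" using h6s by linarith
  have h6': "3*L \<le> m+1" by (subst of_nat_le_iff[where 'a=real, symmetric]) (use Lr in \<open>simp add: field_simps\<close>)
  have h7s: "2*U < m+1" by (subst of_nat_less_iff[where 'a=real, symmetric]) (use Ur in \<open>simp add: field_simps\<close>)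
  have h7: "2*U \<le> m" using h7s by linarith
  have h7': "m \<le> 2*U+1" by (subst of_nat_le_iff[where 'a=real, symmetric]) (use Ur in \<open>simp add: field_simps\<close>)
  have cA: "card A \<ge> 2" using assms(4,9) by simp
  have finA: "finite A" using cA by (intro card_ge_0_finite) simp
  have neA: "A \<noteq> {}" using cA by auto
  have Abd: "\<forall>y\<in>A. a \<le> y \<and> y \<le> b"
    using Min_le[OF finA] Max_ge[OF finA] assms(10,11) by auto
  have mA: "m \<notin> A"
  proof
    assume "m \<in> A" then have "a \<le> m" using Abd by blast
    then show False using h1 by linarith
  qed
  have finB: "finite (insert m A)" using finA by simp
  have geB: "\<forall>y\<in>insert m A. y \<ge> m"
  proof
    fix y assume "y \<in> insert m A"
    then show "y \<ge> m"
    proof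
      assume "y \<in> A" then have "a \<le> y" using Abd by blast
      then show ?thesis using h1 by linarith
    qed simp
  qed
  have nosum: "\<not> (4*m+L \<le> (\<Sum>y\<in>insert m A. g y * y) \<and> (\<Sum>y\<in>insert m A. g y * y) \<le> 4*m+U)" for g
  proof -
    have eq: "(\<Sum>y\<in>insert m A. g y * y) = g m * m + (\<Sum>y\<in>A. g y * y)"
      using finA mA by simp
    have lo: "a * (\<Sum>y\<in>A. g y) \<le> (\<Sum>y\<in>A. g y * y)"
      unfolding sum_distrib_left by (rule sum_mono) (use Abd in \<open>auto simp: mult.commute\<close>)
    have hi: "(\<Sum>y\<in>A. g y * y) \<le> b * (\<Sum>y\<in>A. g y)"
      unfolding sum_distrib_left by (rule sum_mono) (use Abd in \<open>auto simp: mult.commute\<close>)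
    show ?thesis unfolding eq by (rule core[OF h1 h2 lo hi h5 h6 h7])
  qed
  have sub: "{4*m+L .. 4*m+U} \<subseteq> primitives S \<inter> {4 * m .. 5 * m - 1}"
  proof
    fix x assume x: "x \<in> {4*m+L .. 4*m+U}"
    have xS: "x \<in> nonzero S" using x h5 unfolding nonzero_def S_def gen_sg_def by auto
    have xr: "x \<in> {4 * m .. 5 * m - 1}" using x h7 h5 by auto
    have "x \<notin> decomposables S"
    proof
      assume "x \<in> decomposables S"
      then obtain s1 s2 where s: "x = s1 + s2" "s1 \<in> nonzero S" "s2 \<in> nonzero S"
        unfolding decomposables_def by auto
      have m4: "m \<le> 4*m" by simp
      have g1: "s1 \<ge> m" "s2 \<ge> m"
        using S_ge[OF finB geB m4] s(2,3) unfolding S_def by auto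
      have xle: "x \<le> 4*m+U" using x by simp
      have l1: "s1 < 4*m" "s2 < 4*m" using g1 s(1) xle h7 h5 by linarith+
      obtain f1 where f1: "s1 = (\<Sum>y\<in>insert m A. f1 y * y)"
        using s(2) l1(1) unfolding S_def nonzero_def gen_sg_def by auto
      obtain f2 where f2: "s2 = (\<Sum>y\<in>insert m A. f2 y * y)"
        using s(3) l1(2) unfolding S_def nonzero_def gen_sg_def by auto
      have "x = (\<Sum>y\<in>insert m A. (\<lambda>y. f1 y + f2 y) y * y)"
        using s(1) f1 f2 by (simp add: sum.distrib distrib_right)
      then show False using nosum[of "\<lambda>y. f1 y + f2 y"] x by auto
    qed
    then show "x \<in> primitives S \<inter> {4 * m .. 5 * m - 1}"
      using xS xr unfolding primitives_def by auto
  qed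
  have a1: "card {4*m+L .. 4*m+U} \<le> card (primitives S \<inter> {4 * m .. 5 * m - 1})"
    by (rule card_mono[OF _ sub]) auto
  have a2: "card {4*m+L .. 4*m+U} = U + 1 - L" by simp
  have a3: "real m / 6 \<le> real (U + 1 - L)" using h7' h6' by (simp add: of_nat_diff)
  have "real (U + 1 - L) \<le> real (card (primitives S \<inter> {4 * m .. 5 * m - 1}))"
    using a1 a2 by simp
  then have "real m / 6 \<le> real (card (primitives S \<inter> {4 * m .. 5 * m - 1}))"
    using a3 by linarith
  then show ?thesis using sub unfolding L_def U_def S_def by simp
qed

end
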